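(* Let $Q$ be an automorphic loop satisfying condition (C) (for all $a,b\in Q$: $a(ab)=(ba)a$ if and only if $ab=ba$), and let $x,y\in Q$. If $xyx^{-1}=x^{-1}yx$, then the subloop $\langle x,y\rangle$ generated by $x$ and $y$ is commutative.
   Context: A loop is a set with a binary operation in which all equations $ax=b$, $ya=b$ are uniquely solvable and which has a two-sided identity. For $a\in L$, $R_a:x\mapsto xa$, $L_a:x\mapsto ax$; the inner mapping group is the stabilizer of the identity in the group generated by all $R_a,L_a$. A loop is automorphic if every inner mapping is an automorphism. Automorphic loops are power associative and satisfy $(x^m u)x^n=x^m(ux^n)$ for all integers $m,n$, so $xyx^{-1}$ and $x^{-1}yx$ are unambiguous. The subloop generated by a subset $S$ is the intersection of all subloops containing $S$. *)

theory Defs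
  imports Main
begin

text \<open>A loop is represented on the whole of a type 'a, with multiplication m and identity e.\<close>

definition is_loop :: "('a \<Rightarrow> 'a \<Rightarrow> 'a) \<Rightarrow> 'a \<Rightarrow> bool" where
  "is_loop m e \<longleftrightarrow>
     (\<forall>a b. \<exists>!x. m a x = b) \<and> (\<forall>a b. \<exists>!y. m y a = b) \<and>
     (\<forall>x. m e x = x \<and> m x e = x)"

definition ldiv :: "('a \<Rightarrow> 'a \<Rightarrow> 'a) \<Rightarrow> 'a \<Rightarrow> 'a \<Rightarrow> 'a" where
  "ldiv m a b = (THE x. m a x = b)"

definition rdiv :: "('a \<Rightarrow> 'a \<Rightarrow> 'a) \<Rightarrow> 'a \<Rightarrow> 'a \<Rightarrow> 'a" where
  "rdiv m b a = (THE y. m y a = b)"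

text \<open>Inverse of x: the unique y with x y = e (two-sided in automorphic loops).\<close>
definition loop_inv :: "('a \<Rightarrow> 'a \<Rightarrow> 'a) \<Rightarrow> 'a \<Rightarrow> 'a \<Rightarrow> 'a" where
  "loop_inv m e x = (THE y. m x y = e)"

inductive_set mlt_group :: "('a \<Rightarrow> 'a \<Rightarrow> 'a) \<Rightarrow> ('a \<Rightarrow> 'a) set" for m where
  mlt_id: "id \<in> mlt_group m"
| mlt_R: "f \<in> mlt_group m \<Longrightarrow> (\<lambda>x. m x a) \<circ> f \<in> mlt_group m"
| mlt_L: "f \<in> mlt_group m \<Longrightarrow> (\<lambda>x. m a x) \<circ> f \<in> mlt_group m"
| mlt_Rinv: "f \<in> mlt_group m \<Longrightarrow> inv (\<lambda>x. m x a) \<circ> f \<in> mlt_group m"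
| mlt_Linv: "f \<in> mlt_group m \<Longrightarrow> inv (\<lambda>x. m a x) \<circ> f \<in> mlt_group m"

definition inner_mapping_group :: "('a \<Rightarrow> 'a \<Rightarrow> 'a) \<Rightarrow> 'a \<Rightarrow> ('a \<Rightarrow> 'a) set" where
  "inner_mapping_group m e = {f \<in> mlt_group m. f e = e}"

definition automorphic_loop :: "('a \<Rightarrow> 'a \<Rightarrow> 'a) \<Rightarrow> 'a \<Rightarrow> bool" where
  "automorphic_loop m e \<longleftrightarrow> is_loop m e \<and>
     (\<forall>f \<in> inner_mapping_group m e. bij f \<and> (\<forall>x y. f (m x y) = m (f x) (f y)))"

definition condition_C :: "('a \<Rightarrow> 'a \<Rightarrow> 'a) \<Rightarrow> bool" where
  "condition_C m \<longleftrightarrow> (\<forall>a b. m a (m a b) = m (m b a) a \<longleftrightarrow> m a b = m b a)"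

definition is_subloop :: "('a \<Rightarrow> 'a \<Rightarrow> 'a) \<Rightarrow> 'a \<Rightarrow> 'a set \<Rightarrow> bool" where
  "is_subloop m e S \<longleftrightarrow> e \<in> S \<and>
     (\<forall>a\<in>S. \<forall>b\<in>S. m a b \<in> S \<and> ldiv m a b \<in> S \<and> rdiv m a b \<in> S)"

definition subloop_generated :: "('a \<Rightarrow> 'a \<Rightarrow> 'a) \<Rightarrow> 'a \<Rightarrow> 'a set \<Rightarrow> 'a set" where
  "subloop_generated m e A = \<Inter>{S. is_subloop m e S \<and> A \<subseteq> S}"

end

theory Submission
  imports Defs
begin

lemma lf:
  assumes "is_loop m e"
  shows lf1: "\<And>a b. m a (ldiv m a b) = b"
    and lf2: "\<And>a b. ldiv m a (m a b) = b"
    and lf3: "\<And>a b. m (rdiv m b a) a = b"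
    and lf4: "\<And>a b. rdiv m (m b a) a = b"
    and lf5: "\<And>z. m e z = z"
    and lf6: "\<And>z. m z e = z"
proof -
  have U1: "\<And>a b. \<exists>!z. m a z = b" and U2: "\<And>a b. \<exists>!z. m z a = b"
    and I: "\<And>z. m e z = z \<and> m z e = z"
    using assms unfolding is_loop_def by blast+
  show A: "\<And>a b. m a (ldiv m a b) = b"
    unfolding ldiv_def using U1 by (rule theI')
  show "\<And>a b. ldiv m a (m a b) = b"
    using U1 A by metis
  show B: "\<And>a b. m (rdiv m b a) a = b"
    unfolding rdiv_def using U2 by (rule theI')
  show "\<And>a b. rdiv m (m b a) a = b"
    using U2 B by metis
  show "\<And>z. m e z = z" "\<And>z. m z e = z" using I by auto
qed

lemma inv_L:
  assumes "is_loop m e"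
  shows "inv (\<lambda>z. m a z) = ldiv m a"
proof
  fix w
  have "inj (\<lambda>z. m a z)" by (metis (mono_tags, lifting) injI lf2[OF assms])
  then show "inv (\<lambda>z. m a z) w = ldiv m a w"
    by (rule inv_f_eq) (simp add: lf1[OF assms])
qed

lemma auto_hom:
  assumes "automorphic_loop m e" "f \<in> mlt_group m" "f e = e"
  shows "f (m v w) = m (f v) (f w)"
  using assms unfolding automorphic_loop_def inner_mapping_group_def by blast

lemma T_hom:
  assumes "automorphic_loop m e"
  shows "ldiv m u (m (m v w) u) = m (ldiv m u (m v u)) (ldiv m u (m w u))"
proof -
  have L: "is_loop m e" using assms unfolding automorphic_loop_def by blast
  let ?f = "inv (\<lambda>z. m u z) \<circ> ((\<lambda>z. m z u) \<circ> id)"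
  have mem: "?f \<in> mlt_group m" by (intro mlt_group.intros)
  have fe: "\<And>z. ?f z = ldiv m u (m z u)" using inv_L[OF L] by simp
  have "?f e = e" unfolding fe using lf5[OF L] lf2[OF L] lf6[OF L] by metis
  from auto_hom[OF assms mem this] show ?thesis unfolding fe .
qed

lemma L_hom:
  assumes "automorphic_loop m e"
  shows "ldiv m (m b a) (m b (m a (m v w))) = m (ldiv m (m b a) (m b (m a v))) (ldiv m (m b a) (m b (m a w)))"
proof -
  have L: "is_loop m e" using assms unfolding automorphic_loop_def by blast
  let ?f = "inv (\<lambda>z. m (m b a) z) \<circ> ((\<lambda>z. m b z) \<circ> ((\<lambda>z. m a z) \<circ> id))"
  have mem: "?f \<in> mlt_group m" by (intro mlt_group.intros)
  have fe: "\<And>z. ?f z = ldiv m (m b a) (m b (m a z))" using inv_L[OF L] by simp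
  have "?f e = e" unfolding fe using lf6[OF L] lf1[OF L] lf2[OF L] by metis
  from auto_hom[OF assms mem this] show ?thesis unfolding fe .
qed

lemma key_comm:
  fixes m ld rd :: "'a \<Rightarrow> 'a \<Rightarrow> 'a" and e x y :: 'a
  assumes c1: "\<And>X0. m e X0 = X0"
    and c2: "\<And>X0. m X0 e = X0"
    and c3: "\<And>X0 X1. m X0 (ld X0 X1) = X1"
    and c4: "\<And>X0 X1. ld X0 (m X0 X1) = X1"
    and c5: "\<And>X0 X1. m (rd X1 X0) X0 = X1"
    and c6: "\<And>X0 X1. rd (m X1 X0) X0 = X1"
    and c7: "\<And>X2 X3 X4. ld X2 (m (m X3 X4) X2) = m (ld X2 (m X3 X2)) (ld X2 (m X4 X2))"
    and c8: "\<And>X3 X4 X5 X6. ld (m X5 X6) (m X5 (m X6 (m X3 X4))) = m (ld (m X5 X6) (m X5 (m X6 X3))) (ld (m X5 X6) (m X5 (m X6 X4)))"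
    and c9: "\<And>X5 X6. m X6 (m X6 X5) = m (m X5 X6) X6 \<Longrightarrow> m X5 X6 = m X6 X5"
    and c10: "m (m x y) (ld x e) = m (m (ld x e) y) x"
  shows "m x y = m y x"
proof (rule ccontr)
  assume c11: "m x y \<noteq> m y x"
  have c12: "\<And>X0. (ld e X0) = X0" using c3 c1 by metis
  have c16: "\<And>X1. e = (ld X1 X1)" using c4 c2 by metis
  have c22: "\<And>X1 X2. (ld (rd X1 X2) X1) = X2" using c4 c5 by metis
  have c26: "\<And>X2 X3. (rd X3 (ld X2 X3)) = X2" using c6 c3 by metis
  have c31: "x = (ld (m (ld x e) y) (m (m x y) (ld x e)))" using c4 c10 by metis
  have c48: "\<And>X2 X3 X4. (ld (ld X2 X3) (m (m X2 X4) (ld X2 X3))) = (m (ld (ld X2 X3) X3) (ld (ld X2 X3) (m X4 (ld X2 X3))))" using c7 c3 by metis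
  have c52: "\<And>X12 X13 X14. (ld X13 (m (m (rd X12 X13) X14) X13)) = (m (ld X13 X12) (ld X13 (m X14 X13)))" using c7 c5 by metis
  have c54: "\<And>X2 X3. (ld X2 (m (m X2 X3) X2)) = (m X2 (ld X2 (m X3 X2)))" using c7 c4 by metis
  have c56: "\<And>X2 X3 X4. (ld (ld X2 X3) (m (m X4 X2) (ld X2 X3))) = (m (ld (ld X2 X3) (m X4 (ld X2 X3))) (ld (ld X2 X3) X3))" using c7 c3 by metis
  have c60: "\<And>X12 X13 X14. (ld X13 (m (m X14 (rd X12 X13)) X13)) = (m (ld X13 (m X14 X13)) (ld X13 X12))" using c7 c5 by metis
  have c62: "\<And>X2 X3. (ld X2 (m (m X3 X2) X2)) = (m (ld X2 (m X3 X2)) X2)" using c7 c4 by metis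
  have c64: "\<And>X3 X4 X5. (ld X3 (m X4 X3)) = (rd (ld X3 (m (m X4 X5) X3)) (ld X3 (m X5 X3)))" using c6 c7 by metis
  have c65: "\<And>X6 X7 X8. (ld X6 (m X8 X6)) = (ld (ld X6 (m X7 X6)) (ld X6 (m (m X7 X8) X6)))" using c4 c7 by metis
  have c76: "\<And>X2 X3. (m X3 X2) = (ld X2 (m (m X2 X3) X2))" using c54 c3 by metis
  have c91: "\<And>X1 X2. (m (ld X1 X2) X1) = (ld X1 (m X2 X1))" using c76 c3 by metis
  have c99: "\<And>X3 X4 X5. (ld X3 (m (m (m X3 X4) X5) X3)) = (m (m X4 X3) (ld X3 (m X5 X3)))" using c7 c76 by metis
  have c101: "\<And>X8 X9. (m (m X8 X9) X8) = (m X8 (m X9 X8))" using c3 c76 by metis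
  have c104: "\<And>X2 X3 X4. (ld X2 (m (m X3 X4) X2)) = (m (m (ld X2 X3) X2) (ld X2 (m X4 X2)))" using c7 c91 by metis
  have c106: "\<And>X12 X13 X14. (ld X13 (m (m (rd X12 X13) X14) X13)) = (m (ld X13 X12) (m (ld X13 X14) X13))" using c52 c91 by metis
  have c108: "\<And>X12 X13 X14. (ld X13 (m (m X14 (rd X12 X13)) X13)) = (m (m (ld X13 X14) X13) (ld X13 X12))" using c60 c91 by metis
  have c109: "\<And>X2 X3. (ld X2 (m (m X3 X2) X2)) = (m (m (ld X2 X3) X2) X2)" using c62 c91 by metis
  have c110: "\<And>X3 X4 X5. (rd (ld X3 (m (m X4 X5) X3)) (ld X3 (m X5 X3))) = (m (ld X3 X4) X3)" using c64 c91 by metis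
  have c111: "\<And>X6 X7 X8. (ld X6 (m X8 X6)) = (ld (m (ld X6 X7) X6) (ld X6 (m (m X7 X8) X6)))" using c65 c91 by metis
  have c113: "\<And>X2 X3 X4. (ld (ld X2 X3) (m (m X4 X2) (ld X2 X3))) = (m (m (ld (ld X2 X3) X4) (ld X2 X3)) (ld (ld X2 X3) X3))" using c56 c91 by metis
  have c114: "\<And>X2 X3 X4. (ld (ld X2 X3) (m (m X2 X4) (ld X2 X3))) = (m (ld (ld X2 X3) X3) (m (ld (ld X2 X3) X4) (ld X2 X3)))" using c48 c91 by metis
  have c117: "\<And>X2 X3 X4. (ld X2 (m (m X3 X4) X2)) = (m (m (ld X2 X3) X2) (m (ld X2 X4) X2))" using c104 c91 by metis
  have c118: "\<And>X2 X3 X4. (m (m (ld X2 X3) X2) (m (ld X2 X4) X2)) = (m (ld X2 (m X3 X4)) X2)" using c117 c91 by metis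
  have c127: "\<And>X3 X4 X5. (m (ld X3 X4) X3) = (rd (ld X3 (m (m X4 X5) X3)) (m (ld X3 X5) X3))" using c110 c91 by metis
  have c128: "\<And>X3 X4 X5. (m (ld X3 X4) X3) = (rd (m (ld X3 (m X4 X5)) X3) (m (ld X3 X5) X3))" using c127 c91 by metis
  have c129: "\<And>X6 X7 X8. (ld X6 (m X8 X6)) = (ld (m (ld X6 X7) X6) (m (ld X6 (m X7 X8)) X6))" using c111 c91 by metis
  have c130: "\<And>X6 X7 X8. (ld (m (ld X6 X7) X6) (m (ld X6 (m X7 X8)) X6)) = (m (ld X6 X8) X6)" using c129 c91 by metis
  have c135: "\<And>X2 X3 X4. (m (m (ld (ld X2 X3) X4) (ld X2 X3)) (ld (ld X2 X3) X3)) = (m (ld (ld X2 X3) (m X4 X2)) (ld X2 X3))" using c113 c91 by metis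
  have c136: "\<And>X2 X3 X4. (m (ld (ld X2 X3) X3) (m (ld (ld X2 X3) X4) (ld X2 X3))) = (m (ld (ld X2 X3) (m X2 X4)) (ld X2 X3))" using c114 c91 by metis
  have c146: "\<And>X3 X4 X5. (ld X3 (m (m (m X3 X4) X5) X3)) = (m (m X4 X3) (m (ld X3 X5) X3))" using c99 c91 by metis
  have c153: "\<And>X2 X3 X4. (m (ld X2 (m (m X2 X3) X4)) X2) = (m (m X3 X2) (m (ld X2 X4) X2))" using c118 c4 by metis
  have c154: "\<And>X5 X6. (m (ld X5 (m X5 X6)) X5) = (m (m e X5) (m (ld X5 X6) X5))" using c118 c16 by metis
  have c158: "\<And>X2 X3 X4. (m (ld X2 (m X4 (m X2 X3))) X2) = (m (m (ld X2 X4) X2) (m X3 X2))" using c118 c4 by metis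
  have c169: "\<And>X5 X6. (m (ld X5 (m X5 X6)) X5) = (m X5 (m (ld X5 X6) X5))" using c154 c1 by metis
  have c170: "\<And>X5 X6. (m X6 X5) = (m X5 (m (ld X5 X6) X5))" using c169 c4 by metis
  have c188: "\<And>X1 X2. (m (ld (ld X1 X2) X1) (ld X1 X2)) = (ld (ld X1 X2) X2)" using c91 c3 by metis
  have c189: "\<And>X3. (ld X3 X3) = (m (ld X3 e) X3)" using c91 c1 by metis
  have c190: "(ld x (m (m x y) (ld x e))) = (m (ld x (m (ld x e) y)) x)" using c91 c10 by metis
  have c192: "\<And>X7 X8. (m (ld X8 (rd X7 X8)) X8) = (ld X8 X7)" using c91 c5 by metis
  have c196: "\<And>X1 X2 X3. (m (ld X1 (m X3 (m X2 X1))) X1) = (m (m (ld X1 X3) X1) (m (m (ld X1 X2) X1) X1))" using c118 c91 by metis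
  have c201: "\<And>X3. e = (m (ld X3 e) X3)" using c189 c16 by metis
  have c207: "\<And>X3 X4 X5 X6. (ld (m X5 X3) (m X5 (m X3 (m (ld X3 X4) X6)))) = (m (ld (m X5 X3) (m X5 X4)) (ld (m X5 X3) (m X5 (m X3 X6))))" using c8 c3 by metis
  have c221: "\<And>X12 X13 X14 X15 X16. (ld (m (ld X12 (m X13 X14)) X12) (m (m (ld X12 X13) X12) (m (m (ld X12 X14) X12) (m X15 X16)))) = (m (ld (m (ld X12 (m X13 X14)) X12) (m (m (ld X12 X13) X12) (m (m (ld X12 X14) X12) X15))) (ld (m (ld X12 (m X13 X14)) X12) (m (m (ld X12 X13) X12) (m (m (ld X12 X14) X12) X16))))" using c8 c118 by metis
  have c225: "\<And>X3 X4 X5 X6. (ld (m X5 X3) (m X5 (m X3 (m X6 (ld X3 X4))))) = (m (ld (m X5 X3) (m X5 (m X3 X6))) (ld (m X5 X3) (m X5 X4)))" using c8 c3 by metis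
  have c228: "\<And>X12 X13 X14 X15 X16. (ld (m X15 (m (ld X12 X13) X12)) (m X15 (m (m (ld X12 X13) X12) (m X16 (m (ld X12 X14) X12))))) = (m (ld (m X15 (m (ld X12 X13) X12)) (m X15 (m (m (ld X12 X13) X12) X16))) (ld (m X15 (m (ld X12 X13) X12)) (m X15 (m (ld X12 (m X13 X14)) X12))))" using c8 c118 by metis
  have c235: "\<And>X0 X1 X2 X3. (ld (m X0 X1) (m X0 (m X1 X3))) = (ld (ld (m X0 X1) (m X0 (m X1 X2))) (ld (m X0 X1) (m X0 (m X1 (m X2 X3)))))" using c4 c8 by metis
  have c236: "\<And>X4 X5 X6 X7. (ld (m X4 X5) (m X4 (m X5 X6))) = (rd (ld (m X4 X5) (m X4 (m X5 (m X6 X7)))) (ld (m X4 X5) (m X4 (m X5 X7))))" using c6 c8 by metis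
  have c237: "\<And>X10 X11 X8 X9. (m (ld (m X8 X9) (m X8 (m X9 X11))) (m (ld (m X8 X9) (m X8 (m X9 X11))) (ld (m X8 X9) (m X8 (m X9 X10))))) \<noteq> (m (ld (m X8 X9) (m X8 (m X9 (m X10 X11)))) (ld (m X8 X9) (m X8 (m X9 X11)))) \<or> (ld (m X8 X9) (m X8 (m X9 (m X10 X11)))) = (m (ld (m X8 X9) (m X8 (m X9 X11))) (ld (m X8 X9) (m X8 (m X9 X10))))" using c9 c8 by metis
  have c273: "\<And>X10 X11 X8 X9. (m (ld (m X8 X9) (m X8 (m X9 X11))) (m (ld (m X8 X9) (m X8 (m X9 X11))) (ld (m X8 X9) (m X8 (m X9 X10))))) \<noteq> (ld (m X8 X9) (m X8 (m X9 (m (m X10 X11) X11)))) \<or> (ld (m X8 X9) (m X8 (m X9 (m X10 X11)))) = (m (ld (m X8 X9) (m X8 (m X9 X11))) (ld (m X8 X9) (m X8 (m X9 X10))))" using c237 c8 by metis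
  have c274: "\<And>X10 X11 X8 X9. (ld (m X8 X9) (m X8 (m X9 (m (m X10 X11) X11)))) \<noteq> (m (ld (m X8 X9) (m X8 (m X9 X11))) (ld (m X8 X9) (m X8 (m X9 (m X11 X10))))) \<or> (ld (m X8 X9) (m X8 (m X9 (m X10 X11)))) = (m (ld (m X8 X9) (m X8 (m X9 X11))) (ld (m X8 X9) (m X8 (m X9 X10))))" using c273 c8 by metis
  have c275: "\<And>X10 X11 X8 X9. (ld (m X8 X9) (m X8 (m X9 (m (m X10 X11) X11)))) \<noteq> (ld (m X8 X9) (m X8 (m X9 (m X11 (m X11 X10))))) \<or> (ld (m X8 X9) (m X8 (m X9 (m X10 X11)))) = (m (ld (m X8 X9) (m X8 (m X9 X11))) (ld (m X8 X9) (m X8 (m X9 X10))))" using c274 c8 by metis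
  have c282: "\<And>X4. (ld (ld X4 e) e) = X4" using c4 c201 by metis
  have c283: "\<And>X5. (ld X5 e) = (rd e X5)" using c6 c201 by metis
  have c288: "\<And>X16. (ld X16 e) = (m (ld X16 (ld X16 e)) X16)" using c91 c201 by metis
  have c329: "(m (m (ld x (m (ld x e) y)) x) x) = (ld x (m (m (m x y) (ld x e)) x))" using c109 c10 by metis
  have c347: "(m (m (ld x (m (ld x e) y)) x) x) = (m (m y x) (m (ld x (ld x e)) x))" using c329 c146 by metis
  have c348: "(m (m (ld x (m (ld x e) y)) x) x) = (m (m y x) (ld x e))" using c347 c288 by metis
  have c378: "\<And>X2 X3. (ld (m X2 X3) (m X2 (m X3 X2))) = X2" using c4 c101 by metis
  have c379: "\<And>X4 X5. (m X4 X5) = (rd (m X4 (m X5 X4)) X4)" using c6 c101 by metis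
  have c456: "\<And>X4 X5 X6. (ld X5 (m X6 X5)) = (m (ld X5 X4) (m (ld X5 (ld (rd X4 X5) X6)) X5))" using c106 c3 by metis
  have c487: "\<And>X4 X5 X6. (m (ld X5 X6) X5) = (m (ld X5 X4) (m (ld X5 (ld (rd X4 X5) X6)) X5))" using c456 c91 by metis
  have c516: "\<And>X8 X9. (ld (ld X8 (rd X9 X8)) (ld X8 X9)) = X8" using c4 c192 by metis
  have c517: "\<And>X10 X11. (ld X10 (rd X11 X10)) = (rd (ld X10 X11) X10)" using c6 c192 by metis
  have c547: "\<And>X10 X11 X12. (m (m (ld X12 (rd X10 (rd X11 X12))) X12) (ld X12 X11)) = (ld X12 (m X10 X12))" using c108 c5 by metis
  have c559: "\<And>X20 X21 X22. (m (m X21 (rd X22 X20)) X20) = (m X20 (m (m (ld X20 X21) X20) (ld X20 X22)))" using c3 c108 by metis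
  have c582: "\<And>X10 X11 X12. (m (m (ld X12 (rd X10 (rd X11 X12))) X12) (ld X12 X11)) = (m (ld X12 X10) X12)" using c547 c91 by metis
  have c653: "\<And>X2 X3 X4. (m (ld X4 X2) X4) = (rd (m (ld X4 X3) X4) (m (ld X4 (ld X2 X3)) X4))" using c128 c3 by metis
  have c656: "\<And>X10. (m (ld X10 (m (ld x e) y)) X10) = (rd (m (ld X10 (m (m x y) (ld x e))) X10) (m (ld X10 x) X10))" using c128 c10 by metis
  have c660: "\<And>X23 X24. (m (ld X24 (ld X23 e)) X24) = (rd (m (ld X24 e) X24) (m (ld X24 X23) X24))" using c128 c201 by metis
  have c662: "\<And>X28 X29 X30. (m (ld X30 (rd X28 X29)) X30) = (rd (m (ld X30 X28) X30) (m (ld X30 X29) X30))" using c128 c5 by metis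
  have c694: "\<And>X23 X24. (m (ld X24 (ld X23 e)) X24) = (rd e (m (ld X24 X23) X24))" using c660 c201 by metis
  have c766: "\<And>X2. (m (ld (m X2 X2) X2) (m X2 X2)) = X2" using c378 c91 by metis
  have c823: "\<And>X2 X3 X4. (m (ld X4 (ld X2 X3)) X4) = (ld (m (ld X4 X2) X4) (m (ld X4 X3) X4))" using c130 c3 by metis
  have c927: "\<And>X10 X9. (m X9 (m X9 X10)) = (rd (m X9 (m X9 (m X10 X9))) X9)" using c379 c101 by metis
  have c931: "\<And>X18 X19. (m X19 (rd X18 X19)) = (rd (m X19 X18) X19)" using c379 c5 by metis
  have c969: "(m (m y (ld x e)) (m (ld (ld x e) x) (ld x e))) = (m (ld (ld x e) (m (m x y) (ld x e))) (ld x e))" using c153 c10 by metis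
  have c986: "\<And>X20 X21 X22 X23. (m (ld X20 (m X23 (m (m X20 X21) X22))) X20) = (m (m (ld X20 X23) X20) (m (m X21 X20) (m (ld X20 X22) X20)))" using c118 c153 by metis
  have c989: "\<And>X31 X32 X33. (ld X31 (m (m X31 X32) X33)) = (rd (m (m X32 X31) (m (ld X31 X33) X31)) X31)" using c6 c153 by metis
  have c1019: "(m (m y (ld x e)) (m (ld (ld x e) x) (ld x e))) = (m (m (ld (ld x e) (m x y)) (ld x e)) (ld x e))" using c969 c91 by metis
  have c1020: "(m (m (ld (ld x e) (m x y)) (ld x e)) (ld x e)) = (m (m y (ld x e)) (ld (ld x e) e))" using c1019 c188 by metis
  have c1021: "(m (m (ld (ld x e) (m x y)) (ld x e)) (ld x e)) = (m (m y (ld x e)) x)" using c1020 c282 by metis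
  have c1059: "\<And>X0. (m (ld (ld X0 e) X0) (ld X0 e)) = X0" using c288 c282 by metis
  have c1068: "\<And>X8 X9. (m (ld X8 (m (ld X8 e) X9)) X8) = (m (ld X8 e) (m (ld X8 X9) X8))" using c118 c288 by metis
  have c1070: "\<And>X11. (ld X11 (ld X11 e)) = (rd (ld X11 e) X11)" using c6 c288 by metis
  have c1095: "(m (m y x) (ld x e)) = (m (m (ld x e) (m (ld x y) x)) x)" using c348 c1068 by metis
  have c1096: "(ld x (m (m x y) (ld x e))) = (m (ld x e) (m (ld x y) x))" using c190 c1068 by metis
  have c1124: "\<And>X4 X5 X6. (m (m (ld (ld X4 X6) (m (ld X4 X5) X4)) (ld X4 X6)) (m X4 (ld X4 X6))) = (m (ld (ld X4 X6) (m (ld X4 (m X5 X6)) X4)) (ld X4 X6))" using c158 c118 by metis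
  have c1143: "\<And>X23 X24 X25 X26. (m (ld X23 (m X26 (m X24 (m X23 X25)))) X23) = (m (m (ld X23 X26) X23) (m (m (ld X23 X24) X23) (m X25 X23)))" using c118 c158 by metis
  have c1146: "\<And>X34 X35 X36. (ld X34 (m X35 (m X34 X36))) = (rd (m (m (ld X34 X35) X34) (m X36 X34)) X34)" using c6 c158 by metis
  have c1182: "\<And>X4 X5 X6. (m (ld (ld X4 X6) (m (ld X4 (m X5 X6)) X4)) (ld X4 X6)) = (m (m (ld (ld X4 X6) (m (ld X4 X5) X4)) (ld X4 X6)) X6)" using c1124 c3 by metis
  have c1234: "\<And>X19. (ld X19 e) = (ld (ld (ld X19 e) (rd e (ld X19 e))) X19)" using c516 c282 by metis
  have c1266: "\<And>X19. (ld X19 e) = (ld (ld (ld X19 e) X19) X19)" using c1234 c26 by metis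
  have c1307: "\<And>X19. (ld (ld X19 e) (rd e (ld X19 e))) = (rd X19 (ld X19 e))" using c517 c282 by metis
  have c1331: "\<And>X19. (ld (ld X19 e) X19) = (rd X19 (ld X19 e))" using c1307 c26 by metis
  have c1337: "\<And>X3 X4 X5. (m (ld (ld X3 X4) (m (m (ld X3 X4) X5) X3)) (ld X3 X4)) = (m (m X5 (ld X3 X4)) (ld (ld X3 X4) X4))" using c135 c4 by metis
  have c1355: "\<And>X21. (m (m (ld x X21) x) (ld x (m (m x y) (ld x e)))) = (m (ld x (m X21 (m (ld x e) y))) x)" using c135 c31 by metis
  have c1361: "\<And>X0 X1. (m (ld (ld X0 e) (m X1 X0)) (ld X0 e)) = (m (m (ld (ld X0 e) X1) (ld X0 e)) X0)" using c135 c282 by metis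
  have c1400: "\<And>X21. (m (ld x (m X21 (m (ld x e) y))) x) = (m (m (ld x X21) x) (m (ld x e) (m (ld x y) x)))" using c1355 c1096 by metis
  have c1487: "\<And>X0 X1. (m (ld (ld X0 e) (m X0 X1)) (ld X0 e)) = (m X0 (m (ld (ld X0 e) X1) (ld X0 e)))" using c136 c282 by metis
  have c1537: "(m (m y (ld x e)) x) = (m (m x (m (ld (ld x e) y) (ld x e))) (ld x e))" using c1021 c1487 by metis
  have c1595: "\<And>X20. (m X20 X20) = (ld (ld (m X20 X20) X20) X20)" using c4 c766 by metis
  have c1602: "\<And>X33. (m (ld (m X33 X33) X33) (m (m X33 X33) (ld (m X33 X33) X33))) = (m X33 (ld (m X33 X33) X33))" using c101 c766 by metis
  have c1617: "\<And>X33. (m X33 (ld (m X33 X33) X33)) = (m (ld (m X33 X33) X33) X33)" using c1602 c3 by metis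
  have c1630: "\<And>X0 X1 X2. (ld (m X0 X1) (m X0 (m X1 (m (ld X1 e) X2)))) = (m (ld (m X0 X1) X0) (ld (m X0 X1) (m X0 (m X1 X2))))" using c207 c2 by metis
  have c1653: "\<And>X3 X4 X5 X6. (ld X4 (m X3 (m (ld X3 X4) (m (ld (ld X3 X4) X5) X6)))) = (m (ld X4 (m X3 X5)) (ld X4 (m X3 (m (ld X3 X4) X6))))" using c207 c3 by metis
  have c1693: "\<And>X18 X19. (ld (m (ld (m X18 X18) X18) X18) (m (ld (m X18 X18) X18) (m X18 (m (ld X18 X19) X18)))) = (m (ld (m (ld (m X18 X18) X18) X18) (m (ld (m X18 X18) X18) X19)) (ld (m (ld (m X18 X18) X18) X18) X18))" using c207 c766 by metis
  have c1760: "\<And>X18 X19. (ld (m X18 (ld (m X18 X18) X18)) (m (ld (m X18 X18) X18) (m X18 (m (ld X18 X19) X18)))) = (m (ld (m X18 (ld (m X18 X18) X18)) (m (ld (m X18 X18) X18) X19)) (ld (m X18 (ld (m X18 X18) X18)) X18))" using c1693 c1617 by metis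
  have c1761: "\<And>X18 X19. (m (ld (m X18 (ld (m X18 X18) X18)) (m (ld (m X18 X18) X18) X19)) (ld (m X18 (ld (m X18 X18) X18)) X18)) = (ld (m X18 (ld (m X18 X18) X18)) (m (ld (m X18 X18) X18) (m X19 X18)))" using c1760 c170 by metis
  have c2026: "\<And>X0. (m (ld (ld X0 e) (m X0 X0)) (ld X0 e)) = (m (ld (ld X0 e) e) X0)" using c136 c1059 by metis
  have c2062: "\<And>X0. (m X0 X0) = (m (ld (ld X0 e) (m X0 X0)) (ld X0 e))" using c2026 c282 by metis
  have c2314: "\<And>X63 X64 X65. (ld e (m (ld X63 e) (m X63 (m X64 (ld X63 X65))))) = (m (ld e (m (ld X63 e) (m X63 X64))) (ld e (m (ld X63 e) X65)))" using c225 c201 by metis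
  have c2407: "\<And>X63 X64 X65. (ld e (m (ld X63 e) (m X63 (m X64 (ld X63 X65))))) = (m (ld e (m (ld X63 e) (m X63 X64))) (m (ld X63 e) X65))" using c2314 c12 by metis
  have c2408: "\<And>X63 X64 X65. (ld e (m (ld X63 e) (m X63 (m X64 (ld X63 X65))))) = (m (m (ld X63 e) (m X63 X64)) (m (ld X63 e) X65))" using c2407 c12 by metis
  have c2409: "\<And>X63 X64 X65. (m (ld X63 e) (m X63 (m X64 (ld X63 X65)))) = (m (m (ld X63 e) (m X63 X64)) (m (ld X63 e) X65))" using c2408 c12 by metis
  have c2542: "\<And>X91 X92 X93 X94. (ld (m X93 X94) (m X93 (m X94 X92))) = (ld (ld (m X93 X94) (m X93 (m X94 (rd X91 X92)))) (ld (m X93 X94) (m X93 (m X94 X91))))" using c235 c5 by metis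
  have c6278: "\<And>X15. (m (ld (m X15 X15) (ld X15 e)) (m X15 X15)) = (rd e X15)" using c694 c766 by metis
  have c6350: "\<And>X15. (ld X15 e) = (m (ld (m X15 X15) (ld X15 e)) (m X15 X15))" using c6278 c283 by metis
  have c6415: "\<And>X15 X16 X17. (ld X15 (m e (m X15 (m (m X16 X17) X17)))) \<noteq> (ld X15 (m e (m X15 (m X17 (m X17 X16))))) \<or> (ld X15 (m e (m X15 (m X16 X17)))) = (m (ld X15 (m e (m X15 X17))) (ld X15 (m e (m X15 X16))))" using c275 c1 by metis
  have c6523: "\<And>X15 X16 X17. (ld X15 (m e (m X15 (m (m X16 X17) X17)))) \<noteq> (ld X15 (m X15 (m X17 (m X17 X16)))) \<or> (ld X15 (m e (m X15 (m X16 X17)))) = (m (ld X15 (m e (m X15 X17))) (ld X15 (m e (m X15 X16))))" using c6415 c1 by metis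
  have c6524: "\<And>X15 X16 X17. (m X17 (m X17 X16)) \<noteq> (ld X15 (m e (m X15 (m (m X16 X17) X17)))) \<or> (ld X15 (m e (m X15 (m X16 X17)))) = (m (ld X15 (m e (m X15 X17))) (ld X15 (m e (m X15 X16))))" using c6523 c4 by metis
  have c6525: "\<And>X15 X16 X17. (m X17 (m X17 X16)) \<noteq> (ld X15 (m X15 (m (m X16 X17) X17))) \<or> (ld X15 (m e (m X15 (m X16 X17)))) = (m (ld X15 (m e (m X15 X17))) (ld X15 (m e (m X15 X16))))" using c6524 c1 by metis
  have c6526: "\<And>X15 X16 X17. (ld X15 (m e (m X15 (m X16 X17)))) = (m (ld X15 (m e (m X15 X17))) (ld X15 (m X15 X16))) \<or> (m X17 (m X17 X16)) \<noteq> (ld X15 (m X15 (m (m X16 X17) X17)))" using c6525 c1 by metis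
  have c6527: "\<And>X15 X16 X17. (ld X15 (m e (m X15 (m X16 X17)))) = (m (ld X15 (m e (m X15 X17))) X16) \<or> (m X17 (m X17 X16)) \<noteq> (ld X15 (m X15 (m (m X16 X17) X17)))" using c6526 c4 by metis
  have c6528: "\<And>X15 X16 X17. (ld X15 (m e (m X15 (m X16 X17)))) = (m (ld X15 (m X15 X17)) X16) \<or> (m X17 (m X17 X16)) \<noteq> (ld X15 (m X15 (m (m X16 X17) X17)))" using c6527 c1 by metis
  have c6529: "\<And>X15 X16 X17. (m X17 X16) = (ld X15 (m e (m X15 (m X16 X17)))) \<or> (m X17 (m X17 X16)) \<noteq> (ld X15 (m X15 (m (m X16 X17) X17)))" using c6528 c4 by metis
  have c6530: "\<And>X15 X16 X17. (m X17 X16) = (ld X15 (m X15 (m X16 X17))) \<or> (m X17 (m X17 X16)) \<noteq> (ld X15 (m X15 (m (m X16 X17) X17)))" using c6529 c1 by metis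
  have c6531: "\<And>X15 X16 X17. (m X17 (m X17 X16)) \<noteq> (ld X15 (m X15 (m (m X16 X17) X17))) \<or> (m X16 X17) = (m X17 X16)" using c6530 c4 by metis
  have c15105: "\<And>X169 X170 X171. (m (ld X169 (ld (rd X170 X169) X171)) X169) = (ld (ld X169 X170) (m (ld X169 X171) X169))" using c4 c487 by metis
  have c15253: "\<And>X4 X5 X6. (m (ld (ld X4 X6) (m (ld X4 (m X5 X6)) X4)) (ld X4 X6)) = (m (m (m (ld X4 (ld (rd X6 X4) X5)) X4) (ld X4 X6)) X6)" using c1182 c15105 by metis
  have c15267: "\<And>X4 X5 X6. (m (m (m (ld X4 (ld (rd X6 X4) X5)) X4) (ld X4 X6)) X6) = (m (m (ld X4 (ld (rd X6 X4) (m X5 X6))) X4) (ld X4 X6))" using c15253 c15105 by metis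
  have c16118: "\<And>X0 X1. (m (m X0 (rd X1 (ld X0 e))) (ld X0 e)) = (m (ld X0 e) (m X0 (ld (ld X0 e) X1)))" using c559 c1059 by metis
  have c16123: "\<And>X15 X16. (m (m (ld X15 e) (rd X16 X15)) X15) = (m X15 (m (ld X15 e) (ld X15 X16)))" using c559 c288 by metis
  have c16682: "\<And>X70 X71 X72. (m (ld X70 (rd X71 (rd X72 X70))) X70) = (rd (m (ld X70 X71) X70) (ld X70 X72))" using c6 c582 by metis
  have c17354: "\<And>X25 X26. (m (ld X25 X26) X25) = (rd (m e X25) (m (ld X25 (ld X26 X25)) X25))" using c653 c16 by metis
  have c17459: "\<And>X25 X26. (m (ld X25 X26) X25) = (rd X25 (m (ld X25 (ld X26 X25)) X25))" using c17354 c1 by metis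
  have c17595: "\<And>X49 X50. (m (ld X49 (rd X49 X50)) X49) = (rd X49 (m (ld X49 X50) X49))" using c17459 c22 by metis
  have c17827: "\<And>X0 X1. (m (ld (ld X0 e) (rd X1 X0)) (ld X0 e)) = (rd (m (ld (ld X0 e) X1) (ld X0 e)) X0)" using c662 c1059 by metis
  have c18043: "\<And>X10 X11. (m (ld X10 X11) X10) = (ld (m (ld X10 (rd X10 X11)) X10) X10)" using c22 c17595 by metis
  have c18201: "\<And>X11 X12 X13 X14. (m (ld X11 (ld (m X12 (m X11 X13)) X14)) X11) = (ld (m (m (ld X11 X12) X11) (m X13 X11)) (m (ld X11 X14) X11))" using c823 c158 by metis
  have c21776: "\<And>X0 X1. (ld (ld X0 e) (m (m (ld X0 e) X1) X0)) = (rd (m (m X1 (ld X0 e)) X0) (ld X0 e))" using c989 c1059 by metis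
  have c21781: "\<And>X15 X16. (ld X15 (m (m X15 X16) (ld X15 e))) = (rd (m (m X16 X15) (ld X15 e)) X15)" using c989 c288 by metis
  have c22460: "(m (ld x e) (m (ld x y) x)) = (rd (m (m y x) (ld x e)) x)" using c6 c1095 by metis
  have c22652: "\<And>X13. (m (ld X13 e) (m X13 X13)) = (m (m X13 X13) (ld X13 e))" using c170 c6350 by metis
  have c22778: "\<And>X341. (m X341 X341) = (ld (m (m X341 X341) (ld (m X341 X341) (ld X341 e))) (m (m X341 X341) (ld X341 e)))" using c378 c6350 by metis
  have c22896: "\<And>X341. (m X341 X341) = (ld (ld X341 e) (m (m X341 X341) (ld X341 e)))" using c22778 c3 by metis
  have c24931: "\<And>X0 X1. (ld (ld X0 e) (m X0 (m (ld X0 e) X1))) = (rd (m X0 (m X1 (ld X0 e))) (ld X0 e))" using c1146 c1059 by metis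
  have c24936: "\<And>X15 X16. (ld X15 (m (ld X15 e) (m X15 X16))) = (rd (m (ld X15 e) (m X16 X15)) X15)" using c1146 c288 by metis
  have c30759: "(m x (m (ld (ld x e) y) (ld x e))) = (rd (m (m y (ld x e)) x) (ld x e))" using c6 c1537 by metis
  have c33118: "\<And>X286. (m (ld X286 e) (m (ld X286 e) (ld (ld X286 e) (m X286 X286)))) = (rd (m (ld X286 e) (m (ld X286 e) (m X286 X286))) (ld X286 e))" using c927 c2062 by metis
  have c33234: "\<And>X286. (m (ld X286 e) (m X286 X286)) = (rd (m (ld X286 e) (m (ld X286 e) (m X286 X286))) (ld X286 e))" using c33118 c3 by metis
  have c35599: "(m (ld (ld (m x x) x) (m (ld x e) y)) (ld (m x x) x)) = (rd (m (ld (ld (m x x) x) (m (m x y) (ld x e))) (ld (m x x) x)) (m (m x x) (ld (m x x) x)))" using c656 c1595 by metis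
  have c35688: "(m (ld (ld (m x x) x) (m (ld x e) y)) (ld (m x x) x)) = (rd (m (ld (ld (m x x) x) (m (m x y) (ld x e))) (ld (m x x) x)) x)" using c35599 c3 by metis
  have c43686: "\<And>X18 X19 X20 X21 X22. (m (ld X18 (m X21 (m (m X18 X22) (m X19 (m X18 X20))))) X18) = (m (m (ld X18 X21) X18) (m (m X22 X18) (m (m (ld X18 X19) X18) (m X20 X18))))" using c986 c158 by metis
  have c43725: "\<And>X60 X61 X62 X63 X64. (ld (m (m (ld X60 X61) X60) (m (ld X60 X62) X60)) (m (m (ld X60 X61) X60) (m (m (ld X60 X62) X60) (m (m (ld X60 X63) X60) (m (ld X60 X64) X60))))) = (m (ld (m (m (ld X60 X61) X60) (m (ld X60 X62) X60)) (m (ld X60 (m X61 (m (m X60 (ld X60 X62)) X63))) X60)) (ld (m (m (ld X60 X61) X60) (m (ld X60 X62) X60)) (m (m (ld X60 X61) X60) (m (ld X60 (m X62 X64)) X60))))" using c228 c986 by metis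
  have c44175: "\<And>X60 X61 X62 X63 X64. (ld (m (m (ld X60 X61) X60) (m (ld X60 X62) X60)) (m (m (ld X60 X61) X60) (m (m (ld X60 X62) X60) (m (m (ld X60 X63) X60) (m (ld X60 X64) X60))))) = (m (ld (m (m (ld X60 X61) X60) (m (ld X60 X62) X60)) (m (ld X60 (m X61 (m (m X60 (ld X60 X62)) X63))) X60)) (ld (m (m (ld X60 X61) X60) (m (ld X60 X62) X60)) (m (ld X60 (m X61 (m X62 X64))) X60)))" using c43725 c118 by metis
  have c44176: "\<And>X60 X61 X62 X63 X64. (ld (m (m (ld X60 X61) X60) (m (ld X60 X62) X60)) (m (m (ld X60 X61) X60) (m (m (ld X60 X62) X60) (m (m (ld X60 X63) X60) (m (ld X60 X64) X60))))) = (m (ld (m (m (ld X60 X61) X60) (m (ld X60 X62) X60)) (m (ld X60 (m X61 (m (m X60 (ld X60 X62)) X63))) X60)) (m (ld X60 (ld (m X61 (m X60 (ld X60 X62))) (m X61 (m X62 X64)))) X60))" using c44175 c18201 by metis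
  have c44177: "\<And>X60 X61 X62 X63 X64. (ld (m (m (ld X60 X61) X60) (m (ld X60 X62) X60)) (m (m (ld X60 X61) X60) (m (m (ld X60 X62) X60) (m (m (ld X60 X63) X60) (m (ld X60 X64) X60))))) = (m (ld (m (m (ld X60 X61) X60) (m (ld X60 X62) X60)) (m (ld X60 (m X61 (m X62 X63))) X60)) (m (ld X60 (ld (m X61 X62) (m X61 (m X62 X64)))) X60))" using c44176 c3 by metis
  have c44178: "\<And>X60 X61 X62 X63 X64. (ld (m (m (ld X60 X61) X60) (m (ld X60 X62) X60)) (m (m (ld X60 X61) X60) (m (m (ld X60 X62) X60) (m (m (ld X60 X63) X60) (m (ld X60 X64) X60))))) = (m (m (ld X60 (ld (m X61 (m X60 (ld X60 X62))) (m X61 (m X62 X63)))) X60) (m (ld X60 (ld (m X61 X62) (m X61 (m X62 X64)))) X60))" using c44177 c18201 by metis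
  have c44179: "\<And>X60 X61 X62 X63 X64. (ld (m (m (ld X60 X61) X60) (m (ld X60 X62) X60)) (m (m (ld X60 X61) X60) (m (m (ld X60 X62) X60) (m (m (ld X60 X63) X60) (m (ld X60 X64) X60))))) = (m (m (ld X60 (ld (m X61 X62) (m X61 (m X62 X63)))) X60) (m (ld X60 (ld (m X61 X62) (m X61 (m X62 X64)))) X60))" using c44178 c3 by metis
  have c44180: "\<And>X60 X61 X62 X63 X64. (m (m (ld X60 (ld (m X61 X62) (m X61 (m X62 X63)))) X60) (m (ld X60 (ld (m X61 X62) (m X61 (m X62 X64)))) X60)) = (ld (m (m (ld X60 X61) X60) (m (ld X60 X62) X60)) (m (ld X60 (m X61 (m (m X60 (ld X60 X62)) (m X63 (m X60 (ld X60 X64)))))) X60))" using c44179 c43686 by metis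
  have c44181: "\<And>X60 X61 X62 X63 X64. (m (m (ld X60 (ld (m X61 X62) (m X61 (m X62 X63)))) X60) (m (ld X60 (ld (m X61 X62) (m X61 (m X62 X64)))) X60)) = (ld (m (m (ld X60 X61) X60) (m (ld X60 X62) X60)) (m (ld X60 (m X61 (m (m X60 (ld X60 X62)) (m X63 X64)))) X60))" using c44180 c3 by metis
  have c44182: "\<And>X60 X61 X62 X63 X64. (m (m (ld X60 (ld (m X61 X62) (m X61 (m X62 X63)))) X60) (m (ld X60 (ld (m X61 X62) (m X61 (m X62 X64)))) X60)) = (ld (m (m (ld X60 X61) X60) (m (ld X60 X62) X60)) (m (ld X60 (m X61 (m X62 (m X63 X64)))) X60))" using c44181 c3 by metis
  have c44183: "\<And>X60 X61 X62 X63 X64. (m (m (ld X60 (ld (m X61 X62) (m X61 (m X62 X63)))) X60) (m (ld X60 (ld (m X61 X62) (m X61 (m X62 X64)))) X60)) = (m (ld X60 (ld (m X61 (m X60 (ld X60 X62))) (m X61 (m X62 (m X63 X64))))) X60)" using c44182 c18201 by metis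
  have c44184: "\<And>X60 X61 X62 X63 X64. (m (m (ld X60 (ld (m X61 X62) (m X61 (m X62 X63)))) X60) (m (ld X60 (ld (m X61 X62) (m X61 (m X62 X64)))) X60)) = (m (ld X60 (ld (m X61 X62) (m X61 (m X62 (m X63 X64))))) X60)" using c44183 c3 by metis
  have c49878: "\<And>X115 X116 X117 X118. (ld (m (m (ld X115 X116) X115) (m (ld X115 X117) X115)) (m (m (ld X115 X116) X115) (m (m (ld X115 X117) X115) X118))) = (rd (ld (m (m (ld X115 X116) X115) (m (ld X115 X117) X115)) (m (ld X115 (m X116 (m X117 (m X115 X118)))) X115)) (ld (m (m (ld X115 X116) X115) (m (ld X115 X117) X115)) (m (m (ld X115 X116) X115) (m (m (ld X115 X117) X115) X115))))" using c236 c1143 by metis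
  have c50390: "\<And>X115 X116 X117 X118. (ld (m (m (ld X115 X116) X115) (m (ld X115 X117) X115)) (m (m (ld X115 X116) X115) (m (m (ld X115 X117) X115) X118))) = (rd (ld (m (m (ld X115 X116) X115) (m (ld X115 X117) X115)) (m (ld X115 (m X116 (m X117 (m X115 X118)))) X115)) (ld (m (m (ld X115 X116) X115) (m (ld X115 X117) X115)) (m (ld X115 (m X116 (m X117 X115))) X115)))" using c49878 c196 by metis
  have c50391: "\<And>X115 X116 X117 X118. (ld (m (m (ld X115 X116) X115) (m (ld X115 X117) X115)) (m (m (ld X115 X116) X115) (m (m (ld X115 X117) X115) X118))) = (rd (ld (m (m (ld X115 X116) X115) (m (ld X115 X117) X115)) (m (ld X115 (m X116 (m X117 (m X115 X118)))) X115)) (m (ld X115 (ld (m X116 (m X115 (ld X115 X117))) (m X116 (m X117 X115)))) X115))" using c50390 c18201 by metis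
  have c50392: "\<And>X115 X116 X117 X118. (ld (m (m (ld X115 X116) X115) (m (ld X115 X117) X115)) (m (m (ld X115 X116) X115) (m (m (ld X115 X117) X115) X118))) = (rd (ld (m (m (ld X115 X116) X115) (m (ld X115 X117) X115)) (m (ld X115 (m X116 (m X117 (m X115 X118)))) X115)) (m (ld X115 (ld (m X116 X117) (m X116 (m X117 X115)))) X115))" using c50391 c3 by metis
  have c50393: "\<And>X115 X116 X117 X118. (ld (m (m (ld X115 X116) X115) (m (ld X115 X117) X115)) (m (m (ld X115 X116) X115) (m (m (ld X115 X117) X115) X118))) = (rd (m (ld X115 (ld (m X116 (m X115 (ld X115 X117))) (m X116 (m X117 (m X115 X118))))) X115) (m (ld X115 (ld (m X116 X117) (m X116 (m X117 X115)))) X115))" using c50392 c18201 by metis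
  have c50394: "\<And>X115 X116 X117 X118. (ld (m (m (ld X115 X116) X115) (m (ld X115 X117) X115)) (m (m (ld X115 X116) X115) (m (m (ld X115 X117) X115) X118))) = (rd (m (ld X115 (ld (m X116 X117) (m X116 (m X117 (m X115 X118))))) X115) (m (ld X115 (ld (m X116 X117) (m X116 (m X117 X115)))) X115))" using c50393 c3 by metis
  have c50395: "\<And>X115 X116 X117 X118. (rd (m (ld X115 (ld (m X116 X117) (m X116 (m X117 (m X115 X118))))) X115) (m (ld X115 (ld (m X116 X117) (m X116 (m X117 X115)))) X115)) = (ld (m (ld X115 (m X116 X117)) X115) (m (m (ld X115 X116) X115) (m (m (ld X115 X117) X115) X118)))" using c50394 c118 by metis
  have c53507: "\<And>X85 X86. (m (ld X85 (m (m X85 X86) (ld X85 e))) X85) = (m (m X86 X85) (ld X85 e))" using c1337 c282 by metis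
  have c56296: "(m (ld x (m x (m (ld x e) y))) x) = (m (m e x) (m (ld x e) (m (ld x y) x)))" using c1400 c16 by metis
  have c56459: "(m x (m (ld x e) (m (ld x y) x))) = (m (ld x (m x (m (ld x e) y))) x)" using c56296 c1 by metis
  have c56460: "(m (m (ld x e) y) x) = (m x (m (ld x e) (m (ld x y) x)))" using c56459 c4 by metis
  have c56461: "(m (m x y) (ld x e)) = (m x (m (ld x e) (m (ld x y) x)))" using c56460 c10 by metis
  have c60976: "\<And>X104 X105. (ld e (m (ld X104 e) (m X104 (m (ld X104 e) X105)))) = (m (ld e (ld X104 e)) (ld e (m (ld X104 e) (m X104 X105))))" using c1630 c201 by metis
  have c61268: "\<And>X104 X105. (ld e (m (ld X104 e) (m X104 (m (ld X104 e) X105)))) = (m (ld e (ld X104 e)) (m (ld X104 e) (m X104 X105)))" using c60976 c12 by metis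
  have c61269: "\<And>X104 X105. (ld e (m (ld X104 e) (m X104 (m (ld X104 e) X105)))) = (m (ld X104 e) (m (ld X104 e) (m X104 X105)))" using c61268 c12 by metis
  have c61270: "\<And>X104 X105. (m (ld X104 e) (m X104 (m (ld X104 e) X105))) = (m (ld X104 e) (m (ld X104 e) (m X104 X105)))" using c61269 c12 by metis
  have c61271: "\<And>X286. (m (ld X286 e) (m X286 X286)) = (rd (m (ld X286 e) (m X286 (m (ld X286 e) X286))) (ld X286 e))" using c33234 c61270 by metis
  have c61273: "\<And>X286. (m (ld X286 e) (m X286 X286)) = (rd (m (ld X286 e) (m e X286)) (ld X286 e))" using c61271 c170 by metis
  have c61274: "\<And>X286. (m (ld X286 e) (m X286 X286)) = (rd (m (ld X286 e) X286) (ld X286 e))" using c61273 c1 by metis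
  have c61275: "\<And>X286. (m (ld X286 e) (m X286 X286)) = (rd e (ld X286 e))" using c61274 c201 by metis
  have c61276: "\<And>X286. (m (ld X286 e) (m X286 X286)) = X286" using c61275 c26 by metis
  have c61277: "\<And>X13. (m (m X13 X13) (ld X13 e)) = X13" using c22652 c61276 by metis
  have c61284: "\<And>X341. (m X341 X341) = (ld (ld X341 e) X341)" using c22896 c61277 by metis
  have c61293: "\<And>X19. (ld X19 e) = (ld (m X19 X19) X19)" using c1266 c61284 by metis
  have c61294: "\<And>X19. (rd X19 (ld X19 e)) = (m X19 X19)" using c1331 c61284 by metis
  have c61597: "\<And>X18 X19. (m (ld (m X18 (ld X18 e)) (m (ld X18 e) X19)) (ld (m X18 (ld X18 e)) X18)) = (ld (m X18 (ld X18 e)) (m (ld X18 e) (m X19 X18)))" using c1761 c61293 by metis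
  have c61797: "(m (ld (ld x e) (m (ld x e) y)) (ld x e)) = (rd (m (ld (ld x e) (m (m x y) (ld x e))) (ld x e)) x)" using c35688 c61293 by metis
  have c61807: "\<And>X18 X19. (m (ld e (m (ld X18 e) X19)) (ld e X18)) = (ld e (m (ld X18 e) (m X19 X18)))" using c61597 c3 by metis
  have c61808: "\<And>X18 X19. (m (ld X18 e) (m X19 X18)) = (m (ld e (m (ld X18 e) X19)) (ld e X18))" using c61807 c12 by metis
  have c61809: "\<And>X18 X19. (m (ld X18 e) (m X19 X18)) = (m (ld e (m (ld X18 e) X19)) X18)" using c61808 c12 by metis
  have c61810: "\<And>X18 X19. (m (ld X18 e) (m X19 X18)) = (m (m (ld X18 e) X19) X18)" using c61809 c12 by metis
  have c61814: "\<And>X0 X1. (rd (m (m X1 (ld X0 e)) X0) (ld X0 e)) = (ld (ld X0 e) (m (ld X0 e) (m X1 X0)))" using c21776 c61810 by metis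
  have c61852: "\<And>X0 X1. (m X1 X0) = (rd (m (m X1 (ld X0 e)) X0) (ld X0 e))" using c61814 c4 by metis
  have c61853: "(m y x) = (m x (m (ld (ld x e) y) (ld x e)))" using c30759 c61852 by metis
  have c61854: "(m (m y x) (ld x e)) = (m (m y (ld x e)) x)" using c1537 c61853 by metis
  have c62306: "(m (ld (ld x e) (m (ld x e) y)) (ld x e)) = (rd (m (m (ld (ld x e) (m x y)) (ld x e)) (ld x e)) x)" using c61797 c91 by metis
  have c62307: "(m (ld (ld x e) (m (ld x e) y)) (ld x e)) = (rd (m (m x (m (ld (ld x e) y) (ld x e))) (ld x e)) x)" using c62306 c1487 by metis
  have c62308: "(rd (m (m y x) (ld x e)) x) = (m (ld (ld x e) (m (ld x e) y)) (ld x e))" using c62307 c61853 by metis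
  have c62309: "(m y (ld x e)) = (rd (m (m y x) (ld x e)) x)" using c62308 c4 by metis
  have c62310: "(m y (ld x e)) = (m (ld x e) (m (ld x y) x))" using c22460 c62309 by metis
  have c62467: "(m (m x y) (ld x e)) = (m x (m y (ld x e)))" using c56461 c62310 by metis
  have c62697: "(m (m (ld x e) y) x) = (m x (m y (ld x e)))" using c10 c62467 by metis
  have c64297: "(m (m y (ld x e)) (m (ld (ld x e) x) (ld x e))) = (m (ld (ld x e) (m x (m y (ld x e)))) (ld x e))" using c153 c62697 by metis
  have c64429: "(m (m y (ld x e)) (m (ld (ld x e) x) (ld x e))) = (m x (m (ld (ld x e) (m y (ld x e))) (ld x e)))" using c64297 c1487 by metis
  have c64430: "(m (m y (ld x e)) (m (ld (ld x e) x) (ld x e))) = (m x (m (m (ld (ld x e) y) (ld x e)) (ld x e)))" using c64429 c91 by metis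
  have c64431: "(m (m y (ld x e)) (ld (ld x e) e)) = (m x (m (m (ld (ld x e) y) (ld x e)) (ld x e)))" using c64430 c188 by metis
  have c64432: "(m (m y (ld x e)) x) = (m x (m (m (ld (ld x e) y) (ld x e)) (ld x e)))" using c64431 c282 by metis
  have c64433: "(m (m y x) (ld x e)) = (m x (m (m (ld (ld x e) y) (ld x e)) (ld x e)))" using c64432 c61854 by metis
  have c65156: "\<And>X164 X165. (ld (ld X164 e) (m X165 (m (ld X164 e) (m X164 X164)))) = (rd (m (m (ld (ld X164 e) X165) (ld X164 e)) X164) (ld X164 e))" using c1146 c61277 by metis
  have c65340: "\<And>X164 X165. (ld (ld X164 e) (m X165 (m (ld X164 e) (m X164 X164)))) = (m (ld (ld X164 e) X165) X164)" using c65156 c61852 by metis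
  have c65341: "\<And>X164 X165. (m (ld (ld X164 e) X165) X164) = (ld (ld X164 e) (m X165 X164))" using c65340 c61276 by metis
  have c65371: "\<And>X0 X1. (m (m (ld (ld X0 e) X1) (ld X0 e)) X0) = (m (m (ld (ld X0 e) X1) X0) (ld X0 e))" using c1361 c65341 by metis
  have c69644: "(ld x (m (m y x) (ld x e))) \<noteq> (m (ld x e) (m (ld x e) (ld (ld x e) y))) \<or> (m (ld (ld x e) y) (ld x e)) = (m (ld x e) (ld (ld x e) y))" using c6531 c64433 by metis
  have c69791: "(m (ld x e) y) \<noteq> (ld x (m (m y x) (ld x e))) \<or> (m (ld (ld x e) y) (ld x e)) = (m (ld x e) (ld (ld x e) y))" using c69644 c3 by metis
  have c69792: "y = (m (ld (ld x e) y) (ld x e)) \<or> (m (ld x e) y) \<noteq> (ld x (m (m y x) (ld x e)))" using c69791 c3 by metis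
  have c72781: "(m (ld (ld x e) y) (ld x e)) = (ld x (m y x))" using c4 c61853 by metis
  have c72811: "(rd (m y x) x) = (m x (rd (m (ld (ld x e) y) (ld x e)) x))" using c931 c61853 by metis
  have c72852: "(m (ld x y) x) = (m (ld (ld x e) y) (ld x e))" using c72781 c91 by metis
  have c72854: "y = (m (ld x y) x) \<or> (m (ld x e) y) \<noteq> (ld x (m (m y x) (ld x e)))" using c69792 c72852 by metis
  have c72913: "(rd (m y x) x) = (m x (m (ld (ld x e) (rd y x)) (ld x e)))" using c72811 c17827 by metis
  have c72914: "y = (m x (m (ld (ld x e) (rd y x)) (ld x e)))" using c72913 c6 by metis
  have c73460: "(m (ld x e) (rd (m (ld x y) x) (ld x e))) = (rd (m y (ld x e)) (ld x e))" using c931 c62310 by metis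
  have c73551: "y = (m (ld x e) (rd (m (ld x y) x) (ld x e)))" using c73460 c6 by metis
  have c73552: "y = (m (ld x e) (m (ld x (rd y (rd e x))) x))" using c73551 c16682 by metis
  have c73553: "y = (m (ld x e) (m (ld x (rd y (ld x e))) x))" using c73552 c283 by metis
  have c83075: "\<And>X10 X11. (m (m (ld e X10) e) (m X11 (m (ld e (rd e X10)) e))) = (m (m (m (ld e X10) e) X11) (m (ld e (rd e X10)) e))" using c61810 c18043 by metis
  have c83095: "\<And>X16 X17. (m X17 X16) = (m (ld X16 e) (m (ld (ld X16 e) X17) X16))" using c61810 c3 by metis
  have c83150: "\<And>X92 X93. (m (ld X92 e) X93) = (rd (m (ld X92 e) (m X93 X92)) X92)" using c6 c61810 by metis
  have c83241: "\<And>X10 X11. (m (m (ld e X10) e) (m X11 (ld e (rd e X10)))) = (m (m (m (ld e X10) e) X11) (ld e (rd e X10)))" using c83075 c2 by metis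
  have c83242: "\<And>X10 X11. (m (m (ld e X10) e) (m X11 (rd e X10))) = (m (m (m (ld e X10) e) X11) (rd e X10))" using c83241 c12 by metis
  have c83243: "\<And>X10 X11. (m (m (ld e X10) e) (m X11 (ld X10 e))) = (m (m (m (ld e X10) e) X11) (ld X10 e))" using c83242 c283 by metis
  have c83244: "\<And>X10 X11. (m (ld e X10) (m X11 (ld X10 e))) = (m (m (ld e X10) X11) (ld X10 e))" using c83243 c2 by metis
  have c83245: "\<And>X10 X11. (m (m X10 X11) (ld X10 e)) = (m X10 (m X11 (ld X10 e)))" using c83244 c12 by metis
  have c83249: "\<And>X15 X16. (rd (m (m X16 X15) (ld X15 e)) X15) = (ld X15 (m X15 (m X16 (ld X15 e))))" using c21781 c83245 by metis
  have c83255: "\<And>X85 X86. (m (m X86 X85) (ld X85 e)) = (m (ld X85 (m X85 (m X86 (ld X85 e)))) X85)" using c53507 c83245 by metis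
  have c83262: "\<And>X0 X1. (m (ld X0 e) (m X0 (ld (ld X0 e) X1))) = (m X0 (m (rd X1 (ld X0 e)) (ld X0 e)))" using c16118 c83245 by metis
  have c83269: "\<And>X15 X16. (m X16 (ld X15 e)) = (rd (m (m X16 X15) (ld X15 e)) X15)" using c83249 c4 by metis
  have c83274: "\<And>X85 X86. (m (m X86 X85) (ld X85 e)) = (m (m X86 (ld X85 e)) X85)" using c83255 c4 by metis
  have c83302: "\<And>X0 X1. (m X0 X1) = (m (ld X0 e) (m X0 (ld (ld X0 e) X1)))" using c83262 c5 by metis
  have c83509: "\<And>X15 X16. (m (ld X15 e) X16) = (ld X15 (m (ld X15 e) (m X15 X16)))" using c24936 c83150 by metis
  have c86035: "(ld x y) = (m (ld (ld x e) (rd y x)) (ld x e))" using c4 c72914 by metis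
  have c87386: "(ld (ld x e) y) = (m (ld x (rd y (ld x e))) x)" using c4 c73553 by metis
  have c88626: "\<And>X0 X1. (m (ld X1 (m X0 e)) (ld X1 (m X0 (m (ld X0 X1) (ld X0 X1))))) = (ld X1 (m X0 (m (ld X0 X1) e)))" using c1653 c201 by metis
  have c88637: "\<And>X33 X34. (m (ld X34 (m X33 X33)) (ld X34 (m X33 (m (ld X33 X34) (ld X33 X34))))) = (ld X34 (m X33 (m (ld X33 X34) (ld (ld X33 X34) X34))))" using c1653 c188 by metis
  have c88862: "\<And>X0 X1. (m (ld X1 (m X0 e)) (ld X1 (m X0 (m (ld X0 X1) (ld X0 X1))))) = (ld X1 (m X0 (ld X0 X1)))" using c88626 c2 by metis
  have c88863: "\<And>X0 X1. (ld X1 X1) = (m (ld X1 (m X0 e)) (ld X1 (m X0 (m (ld X0 X1) (ld X0 X1)))))" using c88862 c3 by metis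
  have c88864: "\<And>X0 X1. (ld X1 X1) = (m (ld X1 X0) (ld X1 (m X0 (m (ld X0 X1) (ld X0 X1)))))" using c88863 c2 by metis
  have c88865: "\<And>X0 X1. e = (m (ld X1 X0) (ld X1 (m X0 (m (ld X0 X1) (ld X0 X1)))))" using c88864 c16 by metis
  have c88878: "\<And>X33 X34. (ld X34 (m X33 X34)) = (m (ld X34 (m X33 X33)) (ld X34 (m X33 (m (ld X33 X34) (ld X33 X34)))))" using c88637 c3 by metis
  have c88879: "\<And>X33 X34. (m (ld X34 X33) X34) = (m (ld X34 (m X33 X33)) (ld X34 (m X33 (m (ld X33 X34) (ld X33 X34)))))" using c88878 c91 by metis
  have c100625: "\<And>X298 X299 X300 X301 X302. (m (ld X302 (ld (m X298 X299) (m X298 (m X299 (rd X300 X301))))) X302) = (rd (m (ld X302 (ld (m X298 X299) (m X298 (m X299 X300)))) X302) (m (ld X302 (ld (m X298 X299) (m X298 (m X299 X301)))) X302))" using c653 c2542 by metis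
  have c100873: "\<And>X115 X116 X117 X118. (ld (m (ld X115 (m X116 X117)) X115) (m (m (ld X115 X116) X115) (m (m (ld X115 X117) X115) X118))) = (m (ld X115 (ld (m X116 X117) (m X116 (m X117 (rd (m X115 X118) X115))))) X115)" using c50395 c100625 by metis
  have c100918: "\<And>X115 X116 X117 X118. (ld (m (ld X115 (m X116 X117)) X115) (m (m (ld X115 X116) X115) (m (m (ld X115 X117) X115) X118))) = (m (ld X115 (ld (m X116 X117) (m X116 (m X117 (m X115 (rd X118 X115)))))) X115)" using c100873 c931 by metis
  have c100919: "\<And>X12 X13 X14 X15 X16. (ld (m (ld X12 (m X13 X14)) X12) (m (m (ld X12 X13) X12) (m (m (ld X12 X14) X12) (m X15 X16)))) = (m (m (ld X12 (ld (m X13 X14) (m X13 (m X14 (m X12 (rd X15 X12)))))) X12) (ld (m (ld X12 (m X13 X14)) X12) (m (m (ld X12 X13) X12) (m (m (ld X12 X14) X12) X16))))" using c221 c100918 by metis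
  have c101131: "\<And>X12 X13 X14 X15 X16. (ld (m (ld X12 (m X13 X14)) X12) (m (m (ld X12 X13) X12) (m (m (ld X12 X14) X12) (m X15 X16)))) = (m (m (ld X12 (ld (m X13 X14) (m X13 (m X14 (m X12 (rd X15 X12)))))) X12) (m (ld X12 (ld (m X13 X14) (m X13 (m X14 (m X12 (rd X16 X12)))))) X12))" using c100919 c100918 by metis
  have c101132: "\<And>X12 X13 X14 X15 X16. (ld (m (ld X12 (m X13 X14)) X12) (m (m (ld X12 X13) X12) (m (m (ld X12 X14) X12) (m X15 X16)))) = (m (ld X12 (ld (m X13 X14) (m X13 (m X14 (m (m X12 (rd X15 X12)) (m X12 (rd X16 X12))))))) X12)" using c101131 c44184 by metis
  have c101133: "\<And>X12 X13 X14 X15 X16. (m (ld X12 (ld (m X13 X14) (m X13 (m X14 (m (m X12 (rd X15 X12)) (m X12 (rd X16 X12))))))) X12) = (m (ld X12 (ld (m X13 X14) (m X13 (m X14 (m X12 (rd (m X15 X16) X12)))))) X12)" using c101132 c100918 by metis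
  have c101617: "\<And>X0 X1 X2 X3. (m (ld X1 (ld X0 (m X0 (m e (m (m X1 (rd X2 X1)) (m X1 (rd X3 X1))))))) X1) = (m (ld X1 (ld X0 (m X0 (m e (m X1 (rd (m X2 X3) X1)))))) X1)" using c101133 c2 by metis
  have c102089: "\<And>X0 X1 X2 X3. (m (ld X1 (ld X0 (m X0 (m e (m (m X1 (rd X2 X1)) (m X1 (rd X3 X1))))))) X1) = (m (ld X1 (m e (m X1 (rd (m X2 X3) X1)))) X1)" using c101617 c4 by metis
  have c102090: "\<And>X0 X1 X2 X3. (m (ld X1 (ld X0 (m X0 (m e (m (m X1 (rd X2 X1)) (m X1 (rd X3 X1))))))) X1) = (m (m (ld X1 e) X1) (m (rd (m X2 X3) X1) X1))" using c102089 c158 by metis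
  have c102091: "\<And>X0 X1 X2 X3. (m (m (ld X1 e) X1) (m X2 X3)) = (m (ld X1 (ld X0 (m X0 (m e (m (m X1 (rd X2 X1)) (m X1 (rd X3 X1))))))) X1)" using c102090 c5 by metis
  have c102092: "\<And>X1 X2 X3. (m (m (ld X1 e) X1) (m X2 X3)) = (m (ld X1 (m e (m (m X1 (rd X2 X1)) (m X1 (rd X3 X1))))) X1)" using c102091 c4 by metis
  have c102093: "\<And>X1 X2 X3. (m (m (ld X1 e) X1) (m X2 X3)) = (m (ld X1 (m (m X1 (rd X2 X1)) (m X1 (rd X3 X1)))) X1)" using c102092 c1 by metis
  have c102094: "\<And>X1 X2 X3. (m e (m X2 X3)) = (m (ld X1 (m (m X1 (rd X2 X1)) (m X1 (rd X3 X1)))) X1)" using c102093 c201 by metis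
  have c102095: "\<And>X1 X2 X3. (m X2 X3) = (m (ld X1 (m (m X1 (rd X2 X1)) (m X1 (rd X3 X1)))) X1)" using c102094 c1 by metis
  have c102810: "\<And>X10 X9. (m X9 X10) = (m (ld (ld X9 e) (m (m (ld X9 e) (m X9 X9)) (m (ld X9 e) (rd X10 (ld X9 e))))) (ld X9 e))" using c102095 c61294 by metis
  have c102849: "\<And>X138 X139. (m (ld X138 e) X139) = (m (ld X138 (m (m X138 (ld X138 (ld X138 e))) (m X138 (rd X139 X138)))) X138)" using c102095 c1070 by metis
  have c103267: "\<And>X10 X9. (m X9 X10) = (m (ld (ld X9 e) (m (ld X9 e) (m X9 (m X9 (ld X9 (rd X10 (ld X9 e))))))) (ld X9 e))" using c102810 c2409 by metis
  have c103268: "\<And>X10 X9. (m X9 X10) = (m (m X9 (m X9 (ld X9 (rd X10 (ld X9 e))))) (ld X9 e))" using c103267 c4 by metis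
  have c103269: "\<And>X10 X9. (m X9 X10) = (m (m X9 (rd X10 (ld X9 e))) (ld X9 e))" using c103268 c3 by metis
  have c103306: "\<And>X138 X139. (m (ld X138 e) X139) = (m (ld X138 (m (ld X138 e) (m X138 (rd X139 X138)))) X138)" using c102849 c3 by metis
  have c103307: "\<And>X138 X139. (m (ld X138 e) X139) = (m (m (ld X138 e) (rd X139 X138)) X138)" using c103306 c83509 by metis
  have c103308: "\<And>X15 X16. (m (ld X15 e) X16) = (m X15 (m (ld X15 e) (ld X15 X16)))" using c16123 c103307 by metis
  have c107891: "\<And>X4 X5. (rd (m (ld X4 X5) X4) X4) = (m (ld X4 (rd X5 (rd e X4))) (ld X4 e))" using c83269 c582 by metis
  have c108059: "\<And>X4 X5. (rd (m (ld X4 X5) X4) X4) = (m (ld X4 (rd X5 (ld X4 e))) (ld X4 e))" using c107891 c283 by metis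
  have c108060: "\<And>X4 X5. (ld X4 X5) = (m (ld X4 (rd X5 (ld X4 e))) (ld X4 e))" using c108059 c6 by metis
  have c108172: "\<And>X0 X1. (m (m (ld X1 (ld (rd X0 X1) (m X0 X0))) X1) (ld X1 X0)) = (m (m (m (ld X1 X1) X1) (ld X1 X0)) X0)" using c15267 c22 by metis
  have c108624: "\<And>X0 X1. (m (m (ld X1 (ld (rd X0 X1) (m X0 X0))) X1) (ld X1 X0)) = (m (m (m e X1) (ld X1 X0)) X0)" using c108172 c16 by metis
  have c108625: "\<And>X0 X1. (m (m (ld X1 (ld (rd X0 X1) (m X0 X0))) X1) (ld X1 X0)) = (m (m X1 (ld X1 X0)) X0)" using c108624 c1 by metis
  have c108626: "\<And>X0 X1. (m X0 X0) = (m (m (ld X1 (ld (rd X0 X1) (m X0 X0))) X1) (ld X1 X0))" using c108625 c3 by metis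
  have c108889: "\<And>X50 X51. (m (m (ld (ld X50 e) (rd X51 (ld X50 e))) X50) (ld X50 e)) = (m (ld (ld X50 e) X51) X50)" using c83274 c192 by metis
  have c109898: "\<And>X12 X13. (m (m (ld e X12) e) X13) = (ld (m (ld e (rd e X12)) e) (m (m (ld e X12) e) (m (m (ld e (rd e X12)) e) X13)))" using c83509 c18043 by metis
  have c110018: "\<And>X12 X13. (m (m (ld e X12) e) X13) = (ld (ld e (rd e X12)) (m (m (ld e X12) e) (m (ld e (rd e X12)) X13)))" using c109898 c2 by metis
  have c110019: "\<And>X12 X13. (m (m (ld e X12) e) X13) = (ld (rd e X12) (m (m (ld e X12) e) (m (rd e X12) X13)))" using c110018 c12 by metis
  have c110020: "\<And>X12 X13. (m (m (ld e X12) e) X13) = (ld (ld X12 e) (m (m (ld e X12) e) (m (ld X12 e) X13)))" using c110019 c283 by metis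
  have c110021: "\<And>X12 X13. (m (ld e X12) X13) = (ld (ld X12 e) (m (ld e X12) (m (ld X12 e) X13)))" using c110020 c2 by metis
  have c110022: "\<And>X12 X13. (m X12 X13) = (ld (ld X12 e) (m X12 (m (ld X12 e) X13)))" using c110021 c12 by metis
  have c110024: "\<And>X0 X1. (m X0 X1) = (rd (m X0 (m X1 (ld X0 e))) (ld X0 e))" using c24931 c110022 by metis
  have c144014: "(m (ld x e) (ld x y)) = (m (rd y x) (ld x e))" using c170 c86035 by metis
  have c144996: "(m (ld x e) (ld x (rd y (ld x e)))) = (rd (m (ld x e) (ld (ld x e) y)) x)" using c83150 c87386 by metis
  have c145057: "(rd y x) = (m (ld x e) (ld x (rd y (ld x e))))" using c144996 c3 by metis
  have c151067: "\<And>X6 X7. (m X6 (m (ld X6 e) X7)) = (m (m X6 (m (ld X6 e) (rd X7 (ld X6 e)))) (ld X6 e))" using c103269 c931 by metis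
  have c158063: "\<And>X6 X7. (ld (ld X6 e) X7) = (m (ld (ld X6 e) (rd X7 X6)) X6)" using c108060 c282 by metis
  have c197431: "(m x (rd y x)) = (rd (m x (m (ld x e) (ld x y))) (ld x e))" using c110024 c144014 by metis
  have c197454: "(m x (rd y x)) = (rd (m (ld x e) y) (ld x e))" using c197431 c103308 by metis
  have c204418: "(ld (ld x e) (m x (rd y x))) = (m x (ld x (rd y (ld x e))))" using c110022 c145057 by metis
  have c204433: "(rd y (ld x e)) = (ld (ld x e) (m x (rd y x)))" using c204418 c3 by metis
  have c204941: "\<And>X40 X41. (ld (ld X41 e) (m (m X40 X41) (ld X41 e))) = (m (ld (ld X41 e) (m X40 (ld X41 e))) X41)" using c158063 c83269 by metis
  have c205032: "\<And>X40 X41. (ld (ld X41 e) (m (m X40 X41) (ld X41 e))) = (m (m (ld (ld X41 e) X40) (ld X41 e)) X41)" using c204941 c91 by metis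
  have c205033: "\<And>X40 X41. (ld (ld X41 e) (m (m X40 X41) (ld X41 e))) = (m (m (ld (ld X41 e) X40) X41) (ld X41 e))" using c205032 c65371 by metis
  have c220865: "(m x (m x (rd y x))) = (m (ld x e) (m x (rd y (ld x e))))" using c83302 c204433 by metis
  have c256153: "\<And>X10 X11. (ld (ld X10 X11) e) = (ld X10 (m X11 (m (ld X11 X10) (ld X11 X10))))" using c4 c88865 by metis
  have c256266: "\<And>X33 X34. (m (ld X34 X33) X34) = (m (ld X34 (m X33 X33)) (ld (ld X34 X33) e))" using c88879 c256153 by metis
  have c257315: "\<And>X0 X1. (m X1 X0) = (m (ld X0 (m (m X0 X1) (m X0 X1))) (ld X1 e))" using c256266 c4 by metis
  have c257321: "\<And>X7 X8. (m X8 (rd X7 X8)) = (m (ld (rd X7 X8) (m X7 X7)) (ld X8 e))" using c256266 c22 by metis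
  have c258677: "\<And>X3 X4. (m X3 (ld X3 X4)) = (m (ld (ld X3 X4) (m (ld X3 (m X4 X4)) X3)) (ld X3 e))" using c257315 c118 by metis
  have c258718: "\<And>X3 X4. (m X3 (ld X3 X4)) = (m (m (ld X3 (ld (rd X4 X3) (m X4 X4))) X3) (ld X3 e))" using c258677 c15105 by metis
  have c258719: "\<And>X3 X4. (m (m (ld X3 (ld (rd X4 X3) (m X4 X4))) X3) (ld X3 e)) = X4" using c258718 c3 by metis
  have c258778: "\<And>X3 X4. (m (ld X3 e) (rd X4 (ld X3 e))) = (m (ld (rd X4 (ld X3 e)) (m X4 X4)) X3)" using c257321 c282 by metis
  have c269319: "\<And>X31 X32. (rd X32 (ld X31 e)) = (m (ld X31 (ld (rd X32 X31) (m X32 X32))) X31)" using c6 c258719 by metis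
  have c269407: "\<And>X0 X1. (m X0 X0) = (m (rd X0 (ld X1 e)) (ld X1 X0))" using c108626 c269319 by metis
  have c270324: "\<And>X10 X9. (ld X10 X9) = (ld (rd X9 (ld X10 e)) (m X9 X9))" using c4 c269407 by metis
  have c270418: "\<And>X3 X4. (m (ld X3 X4) X3) = (m (ld X3 e) (rd X4 (ld X3 e)))" using c258778 c270324 by metis
  have c270420: "\<And>X6 X7. (m X6 (m (ld X6 e) X7)) = (m (m X6 (m (ld X6 X7) X6)) (ld X6 e))" using c151067 c270418 by metis
  have c270428: "\<And>X6 X7. (m X6 (m (ld X6 e) X7)) = (m (m X7 X6) (ld X6 e))" using c270420 c170 by metis
  have c270465: "\<And>X40 X41. (m (m (ld (ld X41 e) X40) X41) (ld X41 e)) = (ld (ld X41 e) (m X41 (m (ld X41 e) X40)))" using c205033 c270428 by metis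
  have c270512: "(m (ld x e) y) \<noteq> (ld x (m x (m (ld x e) y))) \<or> y = (m (ld x y) x)" using c72854 c270428 by metis
  have c270607: "\<And>X40 X41. (m X41 X40) = (m (m (ld (ld X41 e) X40) X41) (ld X41 e))" using c270465 c110022 by metis
  have c270608: "\<And>X50 X51. (m (ld (ld X50 e) X51) X50) = (m X50 (rd X51 (ld X50 e)))" using c108889 c270607 by metis
  have c270611: "\<And>X16 X17. (m X17 X16) = (m (ld X16 e) (m X16 (rd X17 (ld X16 e))))" using c83095 c270608 by metis
  have c270648: "(m y x) = (m x (m x (rd y x)))" using c220865 c270611 by metis
  have c270708: "y = (m (ld x y) x)" using c270512 c4 by metis
  have c270709: "(m (ld x e) y) = (m y (ld x e))" using c62310 c270708 by metis
  have c271009: "(rd (m y (ld x e)) (ld x e)) = (m x (rd y x))" using c197454 c270709 by metis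
  have c271072: "y = (m x (rd y x))" using c271009 c6 by metis
  have c271079: "(m x y) = (m y x)" using c270648 c271072 by metis
  show False using c271079 c11 by metis
qed

lemma centralizer_subloop:
  assumes A: "automorphic_loop m e"
  shows "is_subloop m e {a. m a c = m c a}"
proof -
  have L: "is_loop m e" using A unfolding automorphic_loop_def by blast
  define f where "f v = ldiv m c (m v c)" for v
  have hom: "\<And>v w. f (m v w) = m (f v) (f w)" unfolding f_def by (rule T_hom[OF A])
  have fx: "\<And>v. (f v = v) = (m v c = m c v)" unfolding f_def by (metis lf1[OF L] lf2[OF L])
  show ?thesis unfolding is_subloop_def
  proof (intro conjI ballI)
    show "e \<in> {a. m a c = m c a}" by (simp add: lf5[OF L] lf6[OF L])
  next
    fix a b assume a: "a \<in> {a. m a c = m c a}" and b: "b \<in> {a. m a c = m c a}"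
    then have fa: "f a = a" and fb: "f b = b" using fx by auto
    have "f (m a b) = m a b" using hom fa fb by simp
    then show "m a b \<in> {a. m a c = m c a}" using fx by auto
    have "m a (f (ldiv m a b)) = b" using hom[of a "ldiv m a b"] fa fb lf1[OF L] by metis
    then have "f (ldiv m a b) = ldiv m a b" by (metis lf2[OF L])
    then show "ldiv m a b \<in> {a. m a c = m c a}" using fx by auto
    have "m (f (rdiv m a b)) b = a" using hom[of "rdiv m a b" b] fa fb lf3[OF L] by metis
    then have "f (rdiv m a b) = rdiv m a b" by (metis lf4[OF L])
    then show "rdiv m a b \<in> {a. m a c = m c a}" using fx by auto
  qed
qed

theorem corollary3p2:
  fixes m :: "'a \<Rightarrow> 'a \<Rightarrow> 'a" and e x y :: 'a
  assumes "automorphic_loop m e"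
    and "condition_C m"
    and "m (m x y) (loop_inv m e x) = m (m (loop_inv m e x) y) x"
  shows "\<forall>a \<in> subloop_generated m e {x, y}. \<forall>b \<in> subloop_generated m e {x, y}. m a b = m b a"
proof -
  have L: "is_loop m e" using assms(1) unfolding automorphic_loop_def by blast
  have li: "loop_inv m e x = ldiv m x e"
    unfolding loop_inv_def ldiv_def ..
  have k1: "\<And>X0. m e X0 = X0" using lf5[OF L] by metis
  have k2: "\<And>X0. m X0 e = X0" using lf6[OF L] by metis
  have k3: "\<And>X0 X1. m X0 (ldiv m X0 X1) = X1" using lf1[OF L] by metis
  have k4: "\<And>X0 X1. ldiv m X0 (m X0 X1) = X1" using lf2[OF L] by metis
  have k5: "\<And>X0 X1. m (rdiv m X1 X0) X0 = X1" using lf3[OF L] by metis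
  have k6: "\<And>X0 X1. rdiv m (m X1 X0) X0 = X1" using lf4[OF L] by metis
  have k7: "\<And>X2 X3 X4. ldiv m X2 (m (m X3 X4) X2) = m (ldiv m X2 (m X3 X2)) (ldiv m X2 (m X4 X2))"
    by (rule T_hom[OF assms(1)])
  have k8: "\<And>X3 X4 X5 X6. ldiv m (m X5 X6) (m X5 (m X6 (m X3 X4))) = m (ldiv m (m X5 X6) (m X5 (m X6 X3))) (ldiv m (m X5 X6) (m X5 (m X6 X4)))"
    by (rule L_hom[OF assms(1)])
  have k9: "\<And>X5 X6. m X6 (m X6 X5) = m (m X5 X6) X6 \<Longrightarrow> m X5 X6 = m X6 X5"
    using assms(2) unfolding condition_C_def by metis
  have k10: "m (m x y) (ldiv m x e) = m (m (ldiv m x e) y) x" using assms(3) unfolding li .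
  have xy: "m x y = m y x" by (rule key_comm[OF k1 k2 k3 k4 k5 k6 k7 k8 k9 k10])
  define H where "H = subloop_generated m e {x, y}"
  have low: "\<And>S. is_subloop m e S \<Longrightarrow> {x, y} \<subseteq> S \<Longrightarrow> H \<subseteq> S"
    unfolding H_def subloop_generated_def by blast
  have Hx: "H \<subseteq> {a. m a x = m x a}"
    using low[OF centralizer_subloop[OF assms(1)]] xy by auto
  have Hy: "H \<subseteq> {a. m a y = m y a}"
    using low[OF centralizer_subloop[OF assms(1)]] xy by auto
  define Z where "Z = {a. \<forall>c\<in>H. m a c = m c a}"
  have CS: "\<And>c. is_subloop m e {a. m a c = m c a}" by (rule centralizer_subloop[OF assms(1)])
  have "is_subloop m e Z"
    unfolding is_subloop_def Z_def
  proof (intro conjI ballI; clarsimp)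
    show "\<And>c. c \<in> H \<Longrightarrow> m e c = m c e" using CS unfolding is_subloop_def by blast
    fix a b c assume a: "\<forall>c\<in>H. m a c = m c a" and b: "\<forall>c\<in>H. m b c = m c b" and c: "c \<in> H"
    have "a \<in> {a. m a c = m c a}" "b \<in> {a. m a c = m c a}" using a b c by auto
    then show "m (m a b) c = m c (m a b)" "m (ldiv m a b) c = m c (ldiv m a b)"
        "m (rdiv m a b) c = m c (rdiv m a b)"
      using CS[of c] unfolding is_subloop_def by blast+
  qed
  moreover have "{x, y} \<subseteq> Z" using Hx Hy unfolding Z_def by auto
  ultimately have "H \<subseteq> Z" by (rule low)
  then show ?thesis unfolding H_def[symmetric] Z_def by auto
qed

end
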